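(* Let $p,q\in\mathbb N$ with $\gcd(p,q)=1$ and suppose $\alpha=\sqrt{p/q}$ is irrational. (1) If the equation $x^2-pqy^2=-1$ has no integer solution, then for $A\in GL(2,\mathbb Z)$, $\pi(A)$ restricts to an isometric automorphism of $\mathcal A_\alpha$ if and only if $A=\begin{bmatrix} x_1&qy_1\\ py_1&x_1\end{bmatrix}^n$ for some $n\in\mathbb Z$, where $(x_1,y_1)$ is the fundamental solution of $x^2-pqy^2=1$. (2) If $x^2-pqy^2=-1$ has an integer solution, then for $A\in GL(2,\mathbb Z)$, $\pi(A)$ restricts to an isometric automorphism of $\mathcal A_\alpha$ if and only if $A=\begin{bmatrix} x_1'&qy_1'\\ py_1'&x_1'\end{bmatrix}^n$ for some $n\in\mathbb Z$, where $(x_1',y_1')$ is the fundamental solution of $x^2-pqy^2=-1$.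
   Context: For a positive irrational $\alpha$, $\mathcal A_\alpha=\{f\in C(\mathbb T^2): \hat f(m,n)=0 \text{ whenever } m+\alpha n<0\}$ ($\mathbb T$ the unit circle, $\hat f$ the Fourier transform on $\mathbb Z^2$), a uniform algebra with the sup norm. For $A=\begin{bmatrix} a&b\\ c&d\end{bmatrix}\in GL(2,\mathbb Z)$, $\pi(A)(f)=f\circ\varphi$ with $\varphi(z,w)=(z^aw^b,z^cw^d)$. For a positive nonsquare integer $N$ and $e\in\{1,-1\}$, the fundamental solution of $x^2-Ny^2=e$ (when a solution exists) is the solution $(x_1,y_1)$ in positive integers with $x_1$ smallest. *)

theory Defs
  imports "HOL-Analysis.Analysis"
begin

definition torus :: "(complex \<times> complex) set" where
  "torus = {(z, w). cmod z = 1 \<and> cmod w = 1}"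

definition fourier_coeff :: "(complex \<times> complex \<Rightarrow> complex) \<Rightarrow> int \<Rightarrow> int \<Rightarrow> complex" where
  "fourier_coeff f m n =
     integral (cbox (0::real, 0::real) (2 * pi, 2 * pi))
       (\<lambda>x. f (cis (fst x), cis (snd x)) * cis (- (of_int m * fst x + of_int n * snd x)))
     / complex_of_real (4 * pi\<^sup>2)"

definition A_alpha :: "real \<Rightarrow> (complex \<times> complex \<Rightarrow> complex) set" where
  "A_alpha \<alpha> = {f. continuous_on torus f \<and>
      (\<forall>m n. real_of_int m + \<alpha> * real_of_int n < 0 \<longrightarrow> fourier_coeff f m n = 0)}"

definition sup_norm :: "(complex \<times> complex \<Rightarrow> complex) \<Rightarrow> real" where
  "sup_norm f = (SUP x\<in>torus. cmod (f x))"

text \<open>A matrix [[a,b],[c,d]] is represented as the quadruple (a,b,c,d).\<close>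
type_synonym mat2 = "int \<times> int \<times> int \<times> int"

fun mat2_mult :: "mat2 \<Rightarrow> mat2 \<Rightarrow> mat2" where
  "mat2_mult (a, b, c, d) (a', b', c', d') =
     (a * a' + b * c', a * b' + b * d', c * a' + d * c', c * b' + d * d')"

definition mat2_one :: mat2 where "mat2_one = (1, 0, 0, 1)"

fun mat2_det :: "mat2 \<Rightarrow> int" where
  "mat2_det (a, b, c, d) = a * d - b * c"

definition GL2Z :: "mat2 set" where
  "GL2Z = {M. mat2_det M = 1 \<or> mat2_det M = -1}"

text \<open>Inverse of a matrix with determinant +-1 (then 1/det = det).\<close>
fun mat2_inv :: "mat2 \<Rightarrow> mat2" where
  "mat2_inv (a, b, c, d) = (let e = a * d - b * c in (e * d, - e * b, - e * c, e * a))"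

fun mat2_pow :: "mat2 \<Rightarrow> nat \<Rightarrow> mat2" where
  "mat2_pow M 0 = mat2_one"
| "mat2_pow M (Suc k) = mat2_mult M (mat2_pow M k)"

definition mat2_zpow :: "mat2 \<Rightarrow> int \<Rightarrow> mat2" where
  "mat2_zpow M n = (if 0 \<le> n then mat2_pow M (nat n) else mat2_pow (mat2_inv M) (nat (- n)))"

fun phi :: "mat2 \<Rightarrow> complex \<times> complex \<Rightarrow> complex \<times> complex" where
  "phi (a, b, c, d) (z, w) = (z powi a * w powi b, z powi c * w powi d)"

definition piA :: "mat2 \<Rightarrow> (complex \<times> complex \<Rightarrow> complex) \<Rightarrow> (complex \<times> complex \<Rightarrow> complex)" where
  "piA M f = f \<circ> phi M"

text \<open>pi(A) restricts to an isometric automorphism of A_alpha: it maps A_alpha into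
  A_alpha, preserves the sup norm, and is bijective on A_alpha (functions being
  identified when they agree on the torus).\<close>
definition isometric_aut :: "real \<Rightarrow> mat2 \<Rightarrow> bool" where
  "isometric_aut \<alpha> M \<longleftrightarrow>
     (\<forall>f\<in>A_alpha \<alpha>. piA M f \<in> A_alpha \<alpha>) \<and>
     (\<forall>f\<in>A_alpha \<alpha>. sup_norm (piA M f) = sup_norm f) \<and>
     (\<forall>f\<in>A_alpha \<alpha>. \<forall>g\<in>A_alpha \<alpha>.
        (\<forall>x\<in>torus. piA M f x = piA M g x) \<longrightarrow> (\<forall>x\<in>torus. f x = g x)) \<and>
     (\<forall>g\<in>A_alpha \<alpha>. \<exists>f\<in>A_alpha \<alpha>. \<forall>x\<in>torus. piA M f x = g x)"

definition is_fundamental_solution :: "int \<Rightarrow> int \<Rightarrow> int \<Rightarrow> int \<Rightarrow> bool" where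
  "is_fundamental_solution N e x1 y1 \<longleftrightarrow>
     x1 > 0 \<and> y1 > 0 \<and> x1\<^sup>2 - N * y1\<^sup>2 = e \<and>
     (\<forall>x y. x > 0 \<and> y > 0 \<and> x\<^sup>2 - N * y\<^sup>2 = e \<longrightarrow> x1 \<le> x)"

end

theory Submission
  imports Defs
begin


lemma periodic_int:
  fixes h :: "real \<Rightarrow> complex"
  assumes "\<And>x. h (x + 2*pi) = h x"
  shows "h (x + 2*pi * of_int k) = h x"
proof -
  have pos: "h (x + 2*pi * real n) = h x" for x n
  proof (induction n arbitrary: x)
    case (Suc n)
    have "x + 2*pi * real (Suc n) = (x + 2*pi * real n) + 2*pi" by (simp add: algebra_simps)
    then show ?case using Suc assms by metis
  qed simp
  show ?thesis
  proof (cases "k \<ge> 0")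
    case True then show ?thesis using pos[of x "nat k"] by simp
  next
    case False
    have "h x = h ((x + 2*pi * of_int k) + 2*pi * real (nat (-k)))"
      using False by simp
    then show ?thesis using pos by metis
  qed
qed




lemma per_shift0:
  fixes h :: "real \<Rightarrow> complex"
  assumes per: "\<And>x. h (x + 2*pi) = h x" and c: "continuous_on UNIV h"
    and b: "0 \<le> b" "b \<le> 2*pi"
  shows "integral {b..b+2*pi} h = integral {0..2*pi} h"
proof -
  have int: "h integrable_on {u..v}" for u v
    by (rule integrable_continuous_interval) (use c continuous_on_subset in blast)
  have "integral {b..b+2*pi} h = integral {b..2*pi} h + integral {2*pi..b+2*pi} h"
    using Henstock_Kurzweil_Integration.integral_combine[where a=b and c="2*pi" and b="b+2*pi" and f=h] b int by simp
  also have "integral {2*pi..b+2*pi} h = integral {0..b} (\<lambda>x. h (x + 2*pi))"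
    using integral_shift_real_ivl[where f=h and c="2*pi" and b="b+2*pi" and a="2*pi"] by simp
  also have "\<dots> = integral {0..b} h" using per by simp
  also have "integral {b..2*pi} h + integral {0..b} h = integral {0..2*pi} h"
    using Henstock_Kurzweil_Integration.integral_combine[where a=0 and c=b and b="2*pi" and f=h] b int by (simp add: add.commute)
  finally show ?thesis .
qed

lemma per_shift:
  fixes h :: "real \<Rightarrow> complex"
  assumes per: "\<And>x. h (x + 2*pi) = h x" and c: "continuous_on UNIV h"
  shows "integral {b..b+2*pi} h = integral {0..2*pi} h"
proof -
  define k where "k = \<lfloor>b / (2*pi)\<rfloor>"
  define b0 where "b0 = b - 2*pi * of_int k"
  have k1: "of_int k \<le> b / (2*pi)" "b / (2*pi) < of_int k + 1" unfolding k_def by linarith+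
  have "0 \<le> b0" "b0 \<le> 2*pi" unfolding b0_def using k1 pi_gt_zero
    by (auto simp: field_simps)
  have "integral {b..b+2*pi} h = integral {b0..b0+2*pi} (\<lambda>x. h (x + 2*pi * of_int k))"
    using integral_shift_real_ivl[where f=h and c="2*pi * of_int k" and b="b+2*pi" and a=b] unfolding b0_def
    by (simp add: algebra_simps)
  also have "\<dots> = integral {b0..b0+2*pi} h"
    using periodic_int[of h, OF per] by simp
  also have "\<dots> = integral {0..2*pi} h" by (rule per_shift0) fact+
  finally show ?thesis .
qed

lemma per_affine:
  fixes h :: "real \<Rightarrow> complex"
  assumes per: "\<And>x. h (x + 2*pi) = h x" and c: "continuous_on UNIV h"
    and e: "e = 1 \<or> e = -1"
  shows "integral {0..2*pi} (\<lambda>s. h (e * s + b)) = integral {0..2*pi} h"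
  using e
proof
  assume "e = 1"
  then show ?thesis
    using integral_shift_real_ivl[where f=h and c=b and b="b + 2*pi" and a=b] per_shift[OF per c, of b]
    by (simp add: add.commute)
next
  assume "e = -1"
  have "integral {0..2*pi} (\<lambda>s. h (- s + b)) = integral {-2*pi..0} (\<lambda>s. h (s + b))"
    using Henstock_Kurzweil_Integration.integral_reflect_real[where a="-(2*pi)" and b=0 and f="\<lambda>s. h (s + b)"] by simp
  also have "\<dots> = integral {b - 2*pi..b} h"
    using integral_shift_real_ivl[where f=h and c=b and b=b and a="b - 2*pi"] by simp
  also have "\<dots> = integral {0..2*pi} h"
    using per_shift[OF per c, of "b - 2*pi"] by simp
  finally show ?thesis using \<open>e = -1\<close> by simp
qed




definition per2 :: "(real \<times> real \<Rightarrow> complex) \<Rightarrow> bool" where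
  "per2 G \<longleftrightarrow> continuous_on UNIV G \<and> (\<forall>u v. G (u + 2*pi, v) = G (u, v) \<and> G (u, v + 2*pi) = G (u, v))"

fun lin :: "mat2 \<Rightarrow> real \<times> real \<Rightarrow> real \<times> real" where
  "lin (a, b, c, d) (s, t) = (of_int a * s + of_int b * t, of_int c * s + of_int d * t)"

definition Iq :: "(real \<times> real \<Rightarrow> complex) \<Rightarrow> complex" where
  "Iq G = integral (cbox (0, 0) (2*pi, 2*pi)) G"

definition inv_ok :: "mat2 \<Rightarrow> bool" where
  "inv_ok M \<longleftrightarrow> (\<forall>G. per2 G \<longrightarrow> Iq (G \<circ> lin M) = Iq G)"

lemma per2_int:
  assumes "per2 G"
  shows "G (u + 2*pi * of_int i, v + 2*pi * of_int j) = G (u, v)"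
proof -
  have "G (u + 2*pi * of_int i, v + 2*pi * of_int j) = G (u, v + 2*pi * of_int j)"
    using periodic_int[of "\<lambda>x. G (x, v + 2*pi * of_int j)"] assms unfolding per2_def by blast
  also have "\<dots> = G (u, v)"
    using periodic_int[of "\<lambda>x. G (u, x)"] assms unfolding per2_def by blast
  finally show ?thesis .
qed

lemma lin_cont: "continuous_on UNIV (lin M)"
proof -
  obtain a b c d where M: "M = (a, b, c, d)" by (cases M) auto
  have "lin M = (\<lambda>x. (of_int a * fst x + of_int b * snd x, of_int c * fst x + of_int d * snd x))"
    unfolding M by (auto simp: fun_eq_iff)
  then show ?thesis by (auto intro!: continuous_intros)
qed

lemma per2_lin:
  assumes "per2 G"
  shows "per2 (G \<circ> lin M)"
proof -
  obtain a b c d where M: "M = (a, b, c, d)" by (cases M) auto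
  have cont: "continuous_on UNIV (G \<circ> lin M)"
    using assms lin_cont unfolding per2_def by (metis continuous_on_compose continuous_on_subset subset_UNIV)
  have 1: "G (lin M (u + 2*pi, v)) = G (lin M (u, v))" for u v
    using per2_int[OF assms, of "of_int a * u + of_int b * v" a "of_int c * u + of_int d * v" c]
    unfolding M by (simp add: algebra_simps)
  have 2: "G (lin M (u, v + 2*pi)) = G (lin M (u, v))" for u v
    using per2_int[OF assms, of "of_int a * u + of_int b * v" b "of_int c * u + of_int d * v" d]
    unfolding M by (simp add: algebra_simps)
  show ?thesis using cont 1 2 unfolding per2_def by simp
qed

lemma lin_mult: "lin (mat2_mult A B) x = lin A (lin B x)"
  by (cases A; cases B; cases x) (simp add: algebra_simps)

lemma inv_ok_mult:
  assumes "inv_ok A" "inv_ok B"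
  shows "inv_ok (mat2_mult A B)"
  unfolding inv_ok_def
proof (intro allI impI)
  fix G assume G: "per2 G"
  have "G \<circ> lin (mat2_mult A B) = (G \<circ> lin A) \<circ> lin B" by (auto simp: lin_mult)
  then show "Iq (G \<circ> lin (mat2_mult A B)) = Iq G"
    using assms per2_lin[OF G, of A] G unfolding inv_ok_def by simp
qed

lemma inv_ok_swap: "inv_ok (0, 1, 1, 0)"
  unfolding inv_ok_def
proof (intro allI impI)
  fix G assume G: "per2 G"
  have c: "continuous_on (cbox (0, 0) (2 * pi, 2 * pi)) (\<lambda>(x, y). G (x, y))"
    using G unfolding per2_def by (auto intro: continuous_on_subset[OF _ subset_UNIV])
  have "G \<circ> lin (0, 1, 1, 0) = (\<lambda>(x, y). G (y, x))" by (auto simp: fun_eq_iff)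
  then show "Iq (G \<circ> lin (0, 1, 1, 0)) = Iq G"
    using integral_swap_2dim[where f="\<lambda>x y. G (x, y)", OF c] unfolding Iq_def by simp
qed

lemma inv_ok_lower:
  assumes a: "a = 1 \<or> a = -1" and d: "d = 1 \<or> d = -1"
  shows "inv_ok (a, 0, c, d)"
  unfolding inv_ok_def
proof (intro allI impI)
  fix G assume G: "per2 G"
  have Gc: "continuous_on UNIV G" using G unfolding per2_def by simp
  define \<psi> where "\<psi> u = integral {0..2*pi} (\<lambda>t. G (u, t))" for u
  have ccomp: "continuous_on UNIV (\<lambda>t. G (f t))" if "continuous_on UNIV f" for f :: "real \<Rightarrow> real \<times> real"
    using continuous_on_compose[OF that continuous_on_subset[OF Gc]] by (simp add: o_def)
  have \<psi>c: "continuous_on UNIV \<psi>"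
  proof -
    have "continuous_on (UNIV \<times> cbox 0 (2*pi)) (\<lambda>(x, t). G (x, t))"
      using Gc by (auto intro: continuous_on_subset[OF _ subset_UNIV])
    from integral_continuous_on_param[OF this] show ?thesis
      unfolding \<psi>_def by simp
  qed
  have \<psi>p: "\<psi> (x + 2*pi) = \<psi> x" for x
    using G unfolding \<psi>_def per2_def by simp
  have inner: "integral {0..2*pi} (\<lambda>t. G (of_int a * s, of_int c * s + of_int d * t)) = \<psi> (of_int a * s)" for s
  proof -
    have "integral {0..2*pi} (\<lambda>t. G (of_int a * s, of_int d * t + of_int c * s))
          = integral {0..2*pi} (\<lambda>t. G (of_int a * s, t))"
      apply (rule per_affine[where h="\<lambda>t. G (of_int a * s, t)"])
      using G d by (auto simp: per2_def intro!: ccomp continuous_intros)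
    then show ?thesis unfolding \<psi>_def by (simp add: add.commute)
  qed
  have c1: "continuous_on (cbox (0, 0) (2 * pi, 2 * pi)) (G \<circ> lin (a, 0, c, d))"
    using per2_lin[OF G] unfolding per2_def by (auto intro: continuous_on_subset[OF _ subset_UNIV])
  have c2: "continuous_on (cbox (0, 0) (2 * pi, 2 * pi)) G"
    using Gc by (auto intro: continuous_on_subset[OF _ subset_UNIV])
  have "Iq (G \<circ> lin (a, 0, c, d)) = integral {0..2*pi} (\<lambda>s. integral {0..2*pi} (\<lambda>t. G (of_int a * s, of_int c * s + of_int d * t)))"
    unfolding Iq_def integral_prod_continuous[OF c1] by simp
  also have "\<dots> = integral {0..2*pi} (\<lambda>s. \<psi> (of_int a * s + 0))"
    using inner by simp
  also have "\<dots> = integral {0..2*pi} \<psi>"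
    by (rule per_affine[OF \<psi>p \<psi>c]) (use a in auto)
  also have "\<dots> = Iq G"
    unfolding Iq_def integral_prod_continuous[OF c2] \<psi>_def by simp
  finally show "Iq (G \<circ> lin (a, 0, c, d)) = Iq G" .
qed




lemma inv_ok_all_aux:
  "\<forall>a b c d. nat \<bar>b\<bar> = N \<longrightarrow> (a * d - b * c = 1 \<or> a * d - b * c = -1) \<longrightarrow> inv_ok (a, b, c, d)"
proof (induction N rule: less_induct)
  case (less N)
  show ?case
  proof (intro allI impI)
    fix a b c d :: int
    assume N: "nat \<bar>b\<bar> = N" and det: "a * d - b * c = 1 \<or> a * d - b * c = -1"
    show "inv_ok (a, b, c, d)"
    proof (cases "b = 0")
      case True
      then have "a * d = 1 \<or> a * d = -1" using det by simp
      then have "(a = 1 \<or> a = -1) \<and> (d = 1 \<or> d = -1)"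
        by (metis mult_cancel_left1 mult_eq_1 zmult_eq_1_iff mult_minus_right neg_equal_iff_equal zmult_eq_1_iff)
      then show ?thesis using inv_ok_lower True by blast
    next
      case False
      define k where "k = - (a div b)"
      have ak: "a + b * k = a mod b" unfolding k_def
        using div_mult_mod_eq[of a b] by (simp add: algebra_simps)
      have lt: "\<bar>a mod b\<bar> < \<bar>b\<bar>" using False
        by (metis abs_mod_less)
      have M: "(a, b, c, d) = mat2_mult (mat2_mult (b, a + b * k, d, c + d * k) (0, 1, 1, 0)) (1, 0, -k, 1)"
        by (simp add: algebra_simps)
      have det': "b * (c + d * k) - (a + b * k) * d = 1 \<or> b * (c + d * k) - (a + b * k) * d = -1"
        using det by (auto simp: algebra_simps)
      have "nat \<bar>a + b * k\<bar> < N" using N lt ak by simp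
      then have "inv_ok (b, a + b * k, d, c + d * k)"
        using less.IH[of "nat \<bar>a + b * k\<bar>"] det' by blast
      moreover have "inv_ok (1, 0, -k, 1)" by (rule inv_ok_lower) auto
      ultimately show ?thesis
        using M inv_ok_mult inv_ok_swap by metis
    qed
  qed
qed

lemma inv_ok_GL: "M \<in> GL2Z \<Longrightarrow> inv_ok M"
  using inv_ok_all_aux unfolding GL2Z_def by (cases M) auto




lemma torus_cis: "(cis s, cis t) \<in> torus"
  unfolding torus_def by simp

lemma torus_ne: "(z, w) \<in> torus \<Longrightarrow> z \<noteq> 0 \<and> w \<noteq> 0"
  unfolding torus_def by auto

lemma phi_cis: "phi (a, b, c, d) (cis s, cis t) =
   (cis (of_int a * s + of_int b * t), cis (of_int c * s + of_int d * t))"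
  by (simp add: cis_power_int cis_mult)

lemma cis_per_int: "cis (x + 2*pi * of_int k) = cis x"
proof -
  have "cis (x + 2*pi * of_int k) = cis x * cis (2*pi * of_int k)" by (rule cis_mult[symmetric])
  also have "cis (2*pi * of_int k) = 1" by (rule cis_multiple_2pi) simp
  finally show ?thesis by simp
qed

definition Gf :: "(complex \<times> complex \<Rightarrow> complex) \<Rightarrow> int \<Rightarrow> int \<Rightarrow> real \<times> real \<Rightarrow> complex" where
  "Gf f m n x = f (cis (fst x), cis (snd x)) * cis (- (of_int m * fst x + of_int n * snd x))"

lemma fourier_Iq: "fourier_coeff f m n = Iq (Gf f m n) / complex_of_real (4 * pi\<^sup>2)"
  unfolding fourier_coeff_def Iq_def Gf_def by simp

lemma cont_cis2: "continuous_on UNIV (\<lambda>x::real\<times>real. (cis (fst x), cis (snd x)))"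
  by (auto intro!: continuous_intros simp: cis_conv_exp)

lemma per2_Gf:
  assumes "continuous_on torus f"
  shows "per2 (Gf f m n)"
proof -
  have c1: "continuous_on UNIV (\<lambda>x::real\<times>real. f (cis (fst x), cis (snd x)))"
    using continuous_on_compose[OF cont_cis2, of f] assms torus_cis
    by (auto simp: o_def intro: continuous_on_subset)
  have c2: "continuous_on UNIV (\<lambda>x::real\<times>real. cis (- (of_int m * fst x + of_int n * snd x)))"
    by (auto intro!: continuous_intros simp: cis_conv_exp)
  have cont: "continuous_on UNIV (Gf f m n)"
    unfolding Gf_def[abs_def] by (intro continuous_intros c1 c2)
  have p1: "Gf f m n (u + 2*pi, v) = Gf f m n (u, v)" for u v
  proof -
    have e1: "cis (- (of_int m * (u + 2*pi) + of_int n * v)) = cis (- (of_int m * u + of_int n * v))"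
      using cis_per_int[of "- (of_int m * u + of_int n * v)" "-m"] by (simp add: algebra_simps)
    have e2: "cis (u + 2*pi) = cis u" using cis_per_int[of u 1] by simp
    show ?thesis by (simp only: Gf_def fst_conv snd_conv e1 e2)
  qed
  have p2: "Gf f m n (u, v + 2*pi) = Gf f m n (u, v)" for u v
  proof -
    have e1: "cis (- (of_int m * u + of_int n * (v + 2*pi))) = cis (- (of_int m * u + of_int n * v))"
      using cis_per_int[of "- (of_int m * u + of_int n * v)" "-n"] by (simp add: algebra_simps)
    have e2: "cis (v + 2*pi) = cis v" using cis_per_int[of v 1] by simp
    show ?thesis by (simp only: Gf_def fst_conv snd_conv e1 e2)
  qed
  show ?thesis unfolding per2_def using cont p1 p2 by simp
qed

lemma fourier_piA:
  assumes M: "M = (a, b, c, d)" and GL: "M \<in> GL2Z" and f: "continuous_on torus f"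
  defines "e \<equiv> a * d - b * c"
  shows "fourier_coeff (piA M f) m n = fourier_coeff f (e * (d * m - c * n)) (e * (a * n - b * m))"
proof -
  define m' where "m' = e * (d * m - c * n)"
  define n' where "n' = e * (a * n - b * m)"
  have e2: "e * e = 1" using GL M unfolding GL2Z_def e_def by auto
  have im: "m = m' * a + n' * c" unfolding m'_def n'_def
  proof -
    have "e * (d * m - c * n) * a + e * (a * n - b * m) * c = (e * e) * m"
      unfolding e_def by (simp add: algebra_simps)
    then show "m = e * (d * m - c * n) * a + e * (a * n - b * m) * c" using e2 by simp
  qed
  have inn: "n = m' * b + n' * d" unfolding m'_def n'_def
  proof -
    have "e * (d * m - c * n) * b + e * (a * n - b * m) * d = (e * e) * n"
      unfolding e_def by (simp add: algebra_simps)
    then show "n = e * (d * m - c * n) * b + e * (a * n - b * m) * d" using e2 by simp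
  qed
  have rm: "real_of_int m = of_int m' * of_int a + of_int n' * of_int c"
    using arg_cong[OF im, of real_of_int] by simp
  have rn: "real_of_int n = of_int m' * of_int b + of_int n' * of_int d"
    using arg_cong[OF inn, of real_of_int] by simp
  have "Gf (piA M f) m n = Gf f m' n' \<circ> lin M"
  proof
    fix x :: "real \<times> real"
    obtain s t where x: "x = (s, t)" by (cases x)
    have "of_int m * s + of_int n * t =
          of_int m' * (of_int a * s + of_int b * t) + of_int n' * (of_int c * s + of_int d * t)"
      unfolding rm rn by (simp add: algebra_simps)
    then show "Gf (piA M f) m n x = (Gf f m' n' \<circ> lin M) x"
      unfolding Gf_def piA_def x M by (simp add: phi_cis del: phi.simps)
  qed
  then have "Iq (Gf (piA M f) m n) = Iq (Gf f m' n')"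
    using inv_ok_GL[OF GL] per2_Gf[OF f] unfolding inv_ok_def by simp
  then show ?thesis unfolding fourier_Iq m'_def n'_def by simp
qed




definition mono :: "int \<Rightarrow> int \<Rightarrow> complex \<times> complex \<Rightarrow> complex" where
  "mono j k x = fst x powi j * snd x powi k"

lemma int_cis: "integral {0..2*pi} (\<lambda>s. cis (of_int r * s)) = (if r = 0 then complex_of_real (2*pi) else 0)"
proof (cases "r = 0")
  case True then show ?thesis by (simp add: scaleR_conv_of_real)
next
  case False
  have a: "\<i> * of_int r \<noteq> (0::complex)" using False by simp
  have "(\<lambda>s. cis (of_int r * s)) = (\<lambda>t. exp ((\<i> * of_int r) * complex_of_real t))"
    by (auto simp: cis_conv_exp fun_eq_iff algebra_simps)
  then have "integral {0..2*pi} (\<lambda>s. cis (of_int r * s)) = (exp ((\<i> * of_int r) * of_real (2*pi)) - 1) / (\<i> * of_int r)"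
    using integral_exp[OF _ a, of "2*pi"] by simp
  also have "exp ((\<i> * of_int r) * of_real (2*pi)) = cis (2 * pi * of_int r)"
    by (simp add: cis_conv_exp algebra_simps)
  also have "\<dots> = 1" by (rule cis_multiple_2pi) simp
  finally show ?thesis using False by simp
qed

lemma mono_cont: "continuous_on torus (mono j k)"
  unfolding mono_def[abs_def]
  by (intro continuous_intros) (auto dest: torus_ne)

lemma fourier_mono: "fourier_coeff (mono j k) m n = (if m = j \<and> n = k then 1 else 0)"
proof -
  have c: "continuous_on (cbox (0, 0) (2 * pi, 2 * pi)) (Gf (mono j k) m n)"
    using per2_Gf[OF mono_cont] unfolding per2_def by (auto intro: continuous_on_subset[OF _ subset_UNIV])
  have g: "Gf (mono j k) m n (s, t) = cis (of_int (j - m) * s) * cis (of_int (k - n) * t)" for s t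
    unfolding Gf_def mono_def by (simp add: cis_power_int cis_mult algebra_simps)
  have "Iq (Gf (mono j k) m n) = integral {0..2*pi} (\<lambda>s. cis (of_int (j - m) * s)) * integral {0..2*pi} (\<lambda>t. cis (of_int (k - n) * t))"
    unfolding Iq_def integral_prod_continuous[OF c] g by simp
  then show ?thesis
    unfolding fourier_Iq int_cis by (auto simp: power2_eq_square)
qed

lemma mono_in_A:
  assumes "real_of_int j + \<alpha> * real_of_int k \<ge> 0"
  shows "mono j k \<in> A_alpha \<alpha>"
  unfolding A_alpha_def using mono_cont assms by (auto simp: fourier_mono)




fun good :: "real \<Rightarrow> mat2 \<Rightarrow> bool" where
  "good \<alpha> (a, b, c, d) \<longleftrightarrow> of_int a + \<alpha> * of_int b > 0 \<and> of_int c + \<alpha> * of_int d = \<alpha> * (of_int a + \<alpha> * of_int b)"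

lemma phi_torus: "x \<in> torus \<Longrightarrow> phi M x \<in> torus"
  by (cases M; cases x) (auto simp: torus_def norm_mult norm_power_int)

lemma phi_mult: "x \<in> torus \<Longrightarrow> phi A (phi B x) = phi (mat2_mult A B) x"
proof -
  assume x: "x \<in> torus"
  obtain z w where xz: "x = (z, w)" by (cases x)
  have nz: "z \<noteq> 0" "w \<noteq> 0" using x xz torus_ne by auto
  obtain a b c d where A: "A = (a, b, c, d)" by (cases A) auto
  obtain a' b' c' d' where B: "B = (a', b', c', d')" by (cases B) auto
  show ?thesis unfolding xz A B
    using nz by (simp add: power_int_mult_distrib power_int_mult[symmetric] power_int_add mult_ac)
qed

lemma phi_one: "phi mat2_one x = x"
  by (cases x) (simp add: mat2_one_def)

lemma GL_det: "M \<in> GL2Z \<Longrightarrow> M = (a, b, c, d) \<Longrightarrow> (a * d - b * c) * (a * d - b * c) = 1"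
  unfolding GL2Z_def by auto

lemma mult_inv: "M \<in> GL2Z \<Longrightarrow> mat2_mult M (mat2_inv M) = mat2_one"
proof -
  assume M: "M \<in> GL2Z"
  obtain a b c d where Md: "M = (a, b, c, d)" by (cases M) auto
  have e: "(a * d - b * c) * (a * d - b * c) = 1" using GL_det[OF M Md] .
  have "a * ((a * d - b * c) * d) + b * (- ((a * d - b * c) * c)) = (a * d - b * c) * (a * d - b * c)"
       "c * ((a * d - b * c) * d) + d * (- ((a * d - b * c) * c)) = 0"
       "a * (- ((a * d - b * c) * b)) + b * ((a * d - b * c) * a) = 0"
       "c * (- ((a * d - b * c) * b)) + d * ((a * d - b * c) * a) = (a * d - b * c) * (a * d - b * c)"
    by (simp_all add: algebra_simps)
  then show ?thesis unfolding Md using e by (simp add: mat2_one_def Let_def)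
qed

lemma inv_mult: "M \<in> GL2Z \<Longrightarrow> mat2_mult (mat2_inv M) M = mat2_one"
proof -
  assume M: "M \<in> GL2Z"
  obtain a b c d where Md: "M = (a, b, c, d)" by (cases M) auto
  have e: "(a * d - b * c) * (a * d - b * c) = 1" using GL_det[OF M Md] .
  have "(a * d - b * c) * d * a + - ((a * d - b * c) * b) * c = (a * d - b * c) * (a * d - b * c)"
       "(a * d - b * c) * d * b + - ((a * d - b * c) * b) * d = 0"
       "- ((a * d - b * c) * c) * a + (a * d - b * c) * a * c = 0"
       "- ((a * d - b * c) * c) * b + (a * d - b * c) * a * d = (a * d - b * c) * (a * d - b * c)"
    by (simp_all add: algebra_simps)
  then show ?thesis unfolding Md using e by (simp add: mat2_one_def Let_def)
qed

lemma inv_GL: "M \<in> GL2Z \<Longrightarrow> mat2_inv M \<in> GL2Z"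
proof -
  assume M: "M \<in> GL2Z"
  obtain a b c d where Md: "M = (a, b, c, d)" by (cases M) auto
  let ?e = "a * d - b * c"
  have "mat2_det (mat2_inv M) = ?e * ?e * ?e"
    unfolding Md by (simp add: Let_def algebra_simps)
  then show ?thesis using M Md unfolding GL2Z_def by auto
qed

lemma phi_inv_right: "M \<in> GL2Z \<Longrightarrow> x \<in> torus \<Longrightarrow> phi M (phi (mat2_inv M) x) = x"
  by (simp add: phi_mult mult_inv phi_one)

lemma phi_inv_left: "M \<in> GL2Z \<Longrightarrow> x \<in> torus \<Longrightarrow> phi (mat2_inv M) (phi M x) = x"
  by (simp add: phi_mult inv_mult phi_one)

lemma phi_image: "M \<in> GL2Z \<Longrightarrow> phi M ` torus = torus"
  using phi_torus phi_inv_right phi_torus by (metis image_eqI subsetI subset_antisym image_subsetI)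

lemma phi_cont: "continuous_on torus (phi M)"
proof -
  obtain a b c d where Md: "M = (a, b, c, d)" by (cases M) auto
  have "phi M = (\<lambda>x. (fst x powi a * snd x powi b, fst x powi c * snd x powi d))"
    unfolding Md by (auto simp: fun_eq_iff)
  then show ?thesis by (simp, intro continuous_intros) (auto dest: torus_ne)
qed

lemma piA_cont: "continuous_on torus f \<Longrightarrow> continuous_on torus (piA M f)"
  unfolding piA_def
  by (rule continuous_on_compose[OF phi_cont continuous_on_subset]) (auto intro: phi_torus)

lemma good_inv:
  assumes M: "M \<in> GL2Z" and g: "good \<alpha> M"
  shows "good \<alpha> (mat2_inv M)"
proof -
  obtain a b c d where Md: "M = (a, b, c, d)" by (cases M) auto
  let ?e = "a * d - b * c"
  have e: "?e * ?e = 1" using GL_det[OF M Md] .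
  have g1: "of_int a + \<alpha> * of_int b > 0" and g2: "of_int c + \<alpha> * of_int d = \<alpha> * (of_int a + \<alpha> * of_int b)"
    using g Md by auto
  have key: "(of_int a + \<alpha> * of_int b) * (of_int d - \<alpha> * of_int b) = real_of_int ?e"
  proof -
    have h: "\<alpha> * (\<alpha> * of_int b) = of_int c + \<alpha> * of_int d - \<alpha> * of_int a"
      using g2 by (simp add: algebra_simps)
    have "(of_int a + \<alpha> * of_int b) * (of_int d - \<alpha> * of_int b) =
      of_int a * of_int d - \<alpha> * of_int a * of_int b + \<alpha> * of_int b * of_int d - of_int b * (\<alpha> * (\<alpha> * of_int b))"
      by (simp add: algebra_simps)
    also have "\<dots> = real_of_int ?e" unfolding h by (simp add: algebra_simps)
    finally show ?thesis .
  qed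
  have ee: "real_of_int ?e * real_of_int ?e = 1" using arg_cong[OF e, of real_of_int] by simp
  have pos: "real_of_int ?e * (of_int d - \<alpha> * of_int b) > 0"
  proof -
    have "(of_int a + \<alpha> * of_int b) * (real_of_int ?e * (of_int d - \<alpha> * of_int b)) =
          real_of_int ?e * ((of_int a + \<alpha> * of_int b) * (of_int d - \<alpha> * of_int b))"
      by (simp only: mult_ac)
    also have "\<dots> = 1" unfolding key by (rule ee)
    finally have "(of_int a + \<alpha> * of_int b) * (real_of_int ?e * (of_int d - \<alpha> * of_int b)) = 1" .
    moreover have "\<And>x y::real. x * y = 1 \<Longrightarrow> x > 0 \<Longrightarrow> y > 0"
      by (metis zero_less_mult_pos zero_less_one)
    ultimately show ?thesis using g1 by blast
  qed
  have inv: "mat2_inv M = (?e * d, - (?e * b), - (?e * c), ?e * a)" by (simp add: Md Let_def)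
  define E where "E = real_of_int ?e"
  have h: "\<alpha> * of_int a - of_int c = \<alpha> * of_int d - \<alpha> * (\<alpha> * of_int b)"
    using g2 by (simp add: algebra_simps)
  have eq: "- (E * of_int c) + \<alpha> * (E * of_int a) = \<alpha> * (E * of_int d + \<alpha> * (- (E * of_int b)))"
  proof -
    have "- (E * of_int c) + \<alpha> * (E * of_int a) = E * (\<alpha> * of_int a - of_int c)" by (simp add: algebra_simps)
    also have "\<dots> = E * (\<alpha> * of_int d - \<alpha> * (\<alpha> * of_int b))" unfolding h ..
    finally show ?thesis by (simp add: algebra_simps)
  qed
  have pos': "E * of_int d + \<alpha> * (- (E * of_int b)) > 0" using pos unfolding E_def by (simp add: algebra_simps)
  show ?thesis unfolding inv good.simps of_int_mult of_int_minus E_def[symmetric]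
    using eq pos' by simp
qed

lemma good_preserves:
  assumes M: "M \<in> GL2Z" and g: "good \<alpha> M" and f: "f \<in> A_alpha \<alpha>"
  shows "piA M f \<in> A_alpha \<alpha>"
proof -
  obtain a b c d where Md: "M = (a, b, c, d)" by (cases M) auto
  let ?e = "a * d - b * c"
  have e: "?e * ?e = 1" using GL_det[OF M Md] .
  have g1: "of_int a + \<alpha> * of_int b > 0" and g2: "of_int c + \<alpha> * of_int d = \<alpha> * (of_int a + \<alpha> * of_int b)"
    using g Md by auto
  have fc: "continuous_on torus f" and fz: "\<And>m n. real_of_int m + \<alpha> * real_of_int n < 0 \<Longrightarrow> fourier_coeff f m n = 0"
    using f unfolding A_alpha_def by auto
  show ?thesis unfolding A_alpha_def
  proof (intro CollectI conjI allI impI)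
    show "continuous_on torus (piA M f)" by (rule piA_cont[OF fc])
    fix m n :: int
    assume neg: "real_of_int m + \<alpha> * real_of_int n < 0"
    define m' where "m' = ?e * (d * m - c * n)"
    define n' where "n' = ?e * (a * n - b * m)"
    have im: "m = m' * a + n' * c"
    proof -
      have "?e * (d * m - c * n) * a + ?e * (a * n - b * m) * c = (?e * ?e) * m"
        by (simp add: algebra_simps)
      then show ?thesis using e unfolding m'_def n'_def by simp
    qed
    have inn: "n = m' * b + n' * d"
    proof -
      have "?e * (d * m - c * n) * b + ?e * (a * n - b * m) * d = (?e * ?e) * n"
        by (simp add: algebra_simps)
      then show ?thesis using e unfolding m'_def n'_def by simp
    qed
    have "real_of_int m + \<alpha> * real_of_int n = of_int m' * (of_int a + \<alpha> * of_int b) + of_int n' * (of_int c + \<alpha> * of_int d)"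
      using arg_cong[OF im, of real_of_int] arg_cong[OF inn, of real_of_int] by (simp add: algebra_simps)
    also have "\<dots> = (of_int a + \<alpha> * of_int b) * (of_int m' + \<alpha> * of_int n')"
      using g2 by (simp add: algebra_simps)
    finally have "(of_int a + \<alpha> * of_int b) * (of_int m' + \<alpha> * of_int n') < 0" using neg by simp
    then have "real_of_int m' + \<alpha> * real_of_int n' < 0" using g1
      by (simp add: mult_less_0_iff)
    then show "fourier_coeff (piA M f) m n = 0"
      using fourier_piA[OF Md M fc] fz unfolding m'_def n'_def by simp
  qed
qed

lemma good_isometric:
  assumes M: "M \<in> GL2Z" and g: "good \<alpha> M"
  shows "isometric_aut \<alpha> M"
  unfolding isometric_aut_def
proof (intro conjI ballI impI)
  fix f assume f: "f \<in> A_alpha \<alpha>"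
  show "piA M f \<in> A_alpha \<alpha>" by (rule good_preserves[OF M g f])
  have "(\<lambda>x. cmod (piA M f x)) ` torus = (\<lambda>x. cmod (f x)) ` (phi M ` torus)"
    unfolding piA_def by (simp add: image_image)
  then show "sup_norm (piA M f) = sup_norm f"
    unfolding sup_norm_def phi_image[OF M] by simp
next
  fix f g x assume "\<forall>x\<in>torus. piA M f x = piA M g x" and x: "x \<in> torus"
  then have "piA M f (phi (mat2_inv M) x) = piA M g (phi (mat2_inv M) x)"
    using phi_torus by blast
  then show "f x = g x" unfolding piA_def using phi_inv_right[OF M x] by simp
next
  fix g assume g': "g \<in> A_alpha \<alpha>"
  show "\<exists>f\<in>A_alpha \<alpha>. \<forall>x\<in>torus. piA M f x = g x"
  proof (intro bexI ballI)
    show "piA (mat2_inv M) g \<in> A_alpha \<alpha>"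
      by (rule good_preserves[OF inv_GL[OF M] good_inv[OF M g] g'])
    fix x assume "x \<in> torus"
    then show "piA M (piA (mat2_inv M) g) x = g x"
      unfolding piA_def using phi_inv_left[OF M] by simp
  qed
qed




lemma approx_pos:
  fixes \<alpha> \<epsilon> :: real
  assumes "\<alpha> \<notin> \<rat>" "\<epsilon> > 0"
  obtains j k :: int where "k > 0" "0 < of_int j + \<alpha> * of_int k" "of_int j + \<alpha> * of_int k < \<epsilon>"
proof -
  have e2: "\<epsilon>/2 > 0" using assms by simp
  obtain h k where "k > 0" "\<bar>of_int k * \<alpha> - of_int h - \<epsilon>/2\<bar> < \<epsilon>/2"
    using sequence_of_fractional_parts_is_dense[OF assms(1) e2] by blast
  then have "- (\<epsilon>/2) < of_int k * \<alpha> - of_int h - \<epsilon>/2" "of_int k * \<alpha> - of_int h - \<epsilon>/2 < \<epsilon>/2" "k > 0"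
    by arith+
  then show ?thesis using that[of k "-h"] by (simp add: algebra_simps)
qed

lemma approx_neg:
  fixes \<alpha> \<epsilon> :: real
  assumes "\<alpha> \<notin> \<rat>" "\<epsilon> > 0"
  obtains j k :: int where "k < 0" "0 < of_int j + \<alpha> * of_int k" "of_int j + \<alpha> * of_int k < \<epsilon>"
proof -
  have e2: "\<epsilon>/2 > 0" using assms by simp
  obtain h k where "k > 0" "\<bar>of_int k * \<alpha> - of_int h - (- \<epsilon>/2)\<bar> < \<epsilon>/2"
    using sequence_of_fractional_parts_is_dense[OF assms(1) e2] by blast
  then have "- (\<epsilon>/2) < of_int k * \<alpha> - of_int h - (- \<epsilon>/2)" "of_int k * \<alpha> - of_int h - (- \<epsilon>/2) < \<epsilon>/2" "k > 0"
    by arith+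
  then show ?thesis using that[of "-k" h] by (simp add: algebra_simps)
qed

lemma halfplane_coeffs:
  fixes \<alpha> \<beta> \<gamma> :: real
  assumes irr: "\<alpha> \<notin> \<rat>" and H: "\<And>j k. real_of_int j + \<alpha> * of_int k \<ge> 0 \<Longrightarrow> \<beta> * of_int j + \<gamma> * of_int k \<ge> 0"
  shows "\<beta> \<ge> 0 \<and> \<gamma> = \<alpha> * \<beta>"
proof -
  have b0: "\<beta> \<ge> 0" using H[of 1 0] by simp
  define \<delta> where "\<delta> = \<gamma> - \<alpha> * \<beta>"
  have lin: "\<beta> * of_int j + \<gamma> * of_int k = \<beta> * (of_int j + \<alpha> * of_int k) + \<delta> * of_int k" for j k
    unfolding \<delta>_def by (simp add: algebra_simps)
  have d1: "\<delta> \<ge> 0"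
  proof (rule ccontr)
    assume "\<not> \<delta> \<ge> 0"
    then have dn: "\<delta> < 0" by simp
    define \<epsilon> where "\<epsilon> = - \<delta> / (\<beta> + 1)"
    have ep: "\<epsilon> > 0" unfolding \<epsilon>_def using divide_neg_pos[OF dn, of "\<beta>+1"] b0 by simp
    have be: "\<beta> * \<epsilon> < - \<delta>"
    proof -
      have "\<beta> * \<epsilon> = -\<delta> * (\<beta> / (\<beta> + 1))" unfolding \<epsilon>_def by simp
      also have "\<dots> < -\<delta> * 1" using dn b0 by (intro mult_strict_left_mono) auto
      finally show ?thesis by simp
    qed
    obtain j k :: int where k: "k > 0" "0 < of_int j + \<alpha> * of_int k" "of_int j + \<alpha> * of_int k < \<epsilon>"
      using approx_pos[OF irr ep] by blast
    have "\<beta> * (of_int j + \<alpha> * of_int k) + \<delta> * of_int k \<ge> 0" using H[of j k] k lin by simp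
    moreover have "\<beta> * (of_int j + \<alpha> * of_int k) \<le> \<beta> * \<epsilon>" using k b0 by (intro mult_left_mono) auto
    moreover have "\<delta> * of_int k \<le> \<delta>" using dn k by (simp add: mult_le_cancel_left1)
    ultimately show False using be by linarith
  qed
  have d2: "\<delta> \<le> 0"
  proof (rule ccontr)
    assume "\<not> \<delta> \<le> 0"
    then have dn: "\<delta> > 0" by simp
    define \<epsilon> where "\<epsilon> = \<delta> / (\<beta> + 1)"
    have ep: "\<epsilon> > 0" unfolding \<epsilon>_def using dn b0 by (auto intro!: divide_pos_pos)
    have be: "\<beta> * \<epsilon> < \<delta>"
    proof -
      have "\<beta> * \<epsilon> = \<delta> * (\<beta> / (\<beta> + 1))" unfolding \<epsilon>_def by simp
      also have "\<dots> < \<delta> * 1" using dn b0 by (intro mult_strict_left_mono) auto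
      finally show ?thesis by simp
    qed
    obtain j k :: int where k: "k < 0" "0 < of_int j + \<alpha> * of_int k" "of_int j + \<alpha> * of_int k < \<epsilon>"
      using approx_neg[OF irr ep] by blast
    have "\<beta> * (of_int j + \<alpha> * of_int k) + \<delta> * of_int k \<ge> 0" using H[of j k] k lin by simp
    moreover have "\<beta> * (of_int j + \<alpha> * of_int k) \<le> \<beta> * \<epsilon>" using k b0 by (intro mult_left_mono) auto
    moreover have "\<delta> * of_int k \<le> - \<delta>"
    proof -
      have "of_int k \<le> (-1::real)" using k by simp
      then have "\<delta> * of_int k \<le> \<delta> * (-1)" using dn by (intro mult_left_mono) auto
      then show ?thesis by simp
    qed
    ultimately show False using be by linarith
  qed
  show ?thesis using b0 d1 d2 unfolding \<delta>_def by simp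
qed

lemma lin_zero:
  fixes \<alpha> :: real
  assumes "\<alpha> \<notin> \<rat>" "of_int a + \<alpha> * of_int b = 0"
  shows "a = 0 \<and> b = 0"
proof (cases "b = 0")
  case True then show ?thesis using assms by simp
next
  case False
  then have "\<alpha> = - of_int a / of_int b" using assms(2) by (simp add: field_simps)
  then have "\<alpha> \<in> \<rat>" by simp
  then show ?thesis using assms by simp
qed

lemma iso_good:
  assumes irr: "\<alpha> \<notin> \<rat>" and M: "M \<in> GL2Z" and iso: "isometric_aut \<alpha> M"
  shows "good \<alpha> M"
proof -
  obtain a b c d where Md: "M = (a, b, c, d)" by (cases M) auto
  let ?e = "a * d - b * c"
  have e: "?e * ?e = 1" using GL_det[OF M Md] .
  have pres: "\<And>f. f \<in> A_alpha \<alpha> \<Longrightarrow> piA M f \<in> A_alpha \<alpha>" using iso unfolding isometric_aut_def by blast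
  have H: "(of_int a + \<alpha> * of_int b) * of_int j + (of_int c + \<alpha> * of_int d) * of_int k \<ge> 0"
    if jk: "real_of_int j + \<alpha> * of_int k \<ge> 0" for j k
  proof -
    have "piA M (mono j k) \<in> A_alpha \<alpha>" using pres mono_in_A[OF jk] by blast
    then have z: "real_of_int (a * j + c * k) + \<alpha> * of_int (b * j + d * k) < 0 \<Longrightarrow>
                  fourier_coeff (piA M (mono j k)) (a * j + c * k) (b * j + d * k) = 0"
      unfolding A_alpha_def by blast
    have j1: "?e * (d * (a * j + c * k) - c * (b * j + d * k)) = j"
    proof -
      have "?e * (d * (a * j + c * k) - c * (b * j + d * k)) = (?e * ?e) * j" by (simp add: algebra_simps)
      then show ?thesis using e by simp
    qed
    have k1: "?e * (a * (b * j + d * k) - b * (a * j + c * k)) = k"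
    proof -
      have "?e * (a * (b * j + d * k) - b * (a * j + c * k)) = (?e * ?e) * k" by (simp add: algebra_simps)
      then show ?thesis using e by simp
    qed
    have "fourier_coeff (piA M (mono j k)) (a * j + c * k) (b * j + d * k) = 1"
      unfolding fourier_piA[OF Md M mono_cont] j1 k1 fourier_mono by simp
    then have "\<not> real_of_int (a * j + c * k) + \<alpha> * of_int (b * j + d * k) < 0" using z by auto
    then show ?thesis by (simp add: algebra_simps)
  qed
  from halfplane_coeffs[OF irr H]
  have h1: "of_int a + \<alpha> * of_int b \<ge> 0" and h2: "of_int c + \<alpha> * of_int d = \<alpha> * (of_int a + \<alpha> * of_int b)"
    by auto
  have "of_int a + \<alpha> * of_int b \<noteq> 0"
  proof
    assume z: "of_int a + \<alpha> * of_int b = 0"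
    then have "a = 0 \<and> b = 0" using lin_zero[OF irr] by blast
    moreover have "c = 0 \<and> d = 0" using lin_zero[OF irr] z h2 by simp
    ultimately show False using e by simp
  qed
  then show ?thesis using h1 h2 Md by simp
qed




definition Mt :: "nat \<Rightarrow> nat \<Rightarrow> int \<Rightarrow> int \<Rightarrow> mat2" where
  "Mt p q x y = (x, int q * y, int p * y, x)"

lemma floor_pow:
  fixes \<epsilon> u :: real
  assumes "\<epsilon> > 1" "u > 0"
  shows "\<exists>n::int. \<epsilon> powi n \<le> u \<and> u < \<epsilon> powi (n + 1)"
proof -
  define n where "n = \<lfloor>log \<epsilon> u\<rfloor>"
  have 1: "\<epsilon> powi n = \<epsilon> powr (of_int n)" using assms powr_real_of_int'[of \<epsilon> n] by simp
  have 2: "\<epsilon> powi (n+1) = \<epsilon> powr (of_int (n+1))" using assms powr_real_of_int'[of \<epsilon> "n+1"] by simp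
  have u: "u = \<epsilon> powr (log \<epsilon> u)" using assms by simp
  have "of_int n \<le> log \<epsilon> u" unfolding n_def by simp
  then have "\<epsilon> powr (of_int n) \<le> \<epsilon> powr (log \<epsilon> u)" using assms by (intro powr_mono) auto
  moreover have "log \<epsilon> u < of_int (n+1)" unfolding n_def by linarith
  then have "\<epsilon> powr (log \<epsilon> u) < \<epsilon> powr (of_int (n+1))" using assms by (intro powr_less_mono) auto
  ultimately show ?thesis using 1 2 u by metis
qed

context
  fixes p q :: nat
  assumes p0: "p > 0" and q0: "q > 0" and cop: "coprime p q" and irr: "sqrt (real p / real q) \<notin> \<rat>"
begin

abbreviation "s \<equiv> sqrt (real (p * q))"
abbreviation "\<alpha>' \<equiv> sqrt (real p / real q)"

lemma alpha_q: "\<alpha>' * real q = s"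
proof -
  have e: "real p / real q * (real q * real q) = real (p*q)" using q0 by (simp add: field_simps)
  have sq: "sqrt (real q * real q) = real q" by simp
  have "\<alpha>' * real q = \<alpha>' * sqrt (real q * real q)" by (simp only: sq)
  also have "\<dots> = sqrt (real p / real q * (real q * real q))" by (rule real_sqrt_mult[symmetric])
  also have "\<dots> = s" by (simp only: e)
  finally show ?thesis .
qed

lemma alpha_sq: "\<alpha>' * \<alpha>' = real p / real q"
  using p0 q0 by simp

lemma s_sq: "s * s = real (p * q)" by simp

lemma s_pos: "s > 0" using p0 q0 by simp

lemma s_irr: "s \<notin> \<rat>"
proof
  assume "s \<in> \<rat>"
  then have "s / real q \<in> \<rat>" by simp
  moreover have "s / real q = \<alpha>'" using alpha_q q0 by (simp add: field_simps)
  ultimately show False using irr by simp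
qed

lemma Mt_inj: "real_of_int x + s * of_int y = of_int x' + s * of_int y' \<Longrightarrow> x = x' \<and> y = y'"
proof -
  assume h: "real_of_int x + s * of_int y = of_int x' + s * of_int y'"
  have "x - x' = 0 \<and> y - y' = 0"
    by (rule lin_zero[OF s_irr]) (use h in \<open>simp add: algebra_simps\<close>)
  then show ?thesis by simp
qed

lemma good_Mt: "good \<alpha>' M \<longleftrightarrow> (\<exists>x y. M = Mt p q x y \<and> real_of_int x + s * of_int y > 0)"
proof
  assume g: "good \<alpha>' M"
  obtain a b c d where Md: "M = (a, b, c, d)" by (cases M) auto
  have g1: "of_int a + \<alpha>' * of_int b > 0" and g2: "of_int c + \<alpha>' * of_int d = \<alpha>' * (of_int a + \<alpha>' * of_int b)"
    using g Md by auto
  have "real_of_int (int q * c - int p * b) + \<alpha>' * of_int (int q * (d - a)) =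
        real q * (of_int c + \<alpha>' * of_int d - \<alpha>' * of_int a - (\<alpha>' * \<alpha>') * of_int b)"
    using q0 by (simp add: algebra_simps)
  also have "\<dots> = 0" using g2 by (simp add: algebra_simps)
  finally have "int q * c - int p * b = 0 \<and> int q * (d - a) = 0" using lin_zero[OF irr] by blast
  then have qc: "int q * c = int p * b" and da: "d = a" using q0 by auto
  have "int q dvd int p * b" using qc by (metis dvd_triv_left)
  moreover have "coprime (int q) (int p)" using cop by (simp add: coprime_commute)
  ultimately have "int q dvd b" using coprime_dvd_mult_right_iff by blast
  then obtain y where b: "b = int q * y" by blast
  have c: "c = int p * y" using qc b q0 by (simp add: algebra_simps)
  have M: "M = Mt p q a y" unfolding Md Mt_def b c da by simp
  have "real_of_int a + s * of_int y = of_int a + \<alpha>' * of_int b"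
    unfolding b alpha_q[symmetric] by (simp add: mult_ac)
  then have "real_of_int a + s * of_int y > 0" using g1 by simp
  then show "\<exists>x y. M = Mt p q x y \<and> real_of_int x + s * of_int y > 0"
    using M by blast
next
  assume "\<exists>x y. M = Mt p q x y \<and> real_of_int x + s * of_int y > 0"
  then obtain x y where M: "M = Mt p q x y" and pos: "real_of_int x + s * of_int y > 0" by blast
  have "real_of_int x + \<alpha>' * (real q * of_int y) > 0" using pos alpha_q by (simp add: mult.assoc[symmetric])
  moreover have "real p * of_int y + \<alpha>' * of_int x = \<alpha>' * (of_int x + \<alpha>' * (real q * of_int y))"
  proof -
    have "\<alpha>' * (\<alpha>' * (real q * of_int y)) = (\<alpha>' * \<alpha>') * real q * of_int y" by (simp add: mult_ac)
    also have "\<dots> = real p * of_int y" unfolding alpha_sq using q0 by auto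
    finally show ?thesis by (simp only: distrib_left)
  qed
  ultimately show "good \<alpha>' M" unfolding M Mt_def by simp
qed


definition v :: "int \<Rightarrow> int \<Rightarrow> real" where "v x y = of_int x + s * of_int y"

abbreviation "D \<equiv> int (p * q)"

lemma D_real: "real_of_int D = s * s" by simp

lemma D_pos: "D > 0" using p0 q0 by simp

lemma norm_mult: "(x * x' + D * y * y')^2 - D * (x * y' + y * x')^2 = (x^2 - D * y^2) * (x'^2 - D * y'^2)"
  by (simp add: power2_eq_square algebra_simps)

lemma v_mult: "v (x * x' + D * y * y') (x * y' + y * x') = v x y * v x' y'"
proof -
  have "v (x * x' + D * y * y') (x * y' + y * x') = of_int x * of_int x' + real_of_int D * of_int y * of_int y' + s * (of_int x * of_int y' + of_int y * of_int x')"
    unfolding v_def by simp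
  also have "\<dots> = v x y * v x' y'" unfolding D_real v_def by (simp add: algebra_simps)
  finally show ?thesis .
qed

lemma v_conj: "v x y * (of_int x - s * of_int y) = of_int (x^2 - D * y^2)"
proof -
  have "v x y * (of_int x - s * of_int y) = of_int x * of_int x - (s * s) * of_int y * of_int y"
    unfolding v_def by (simp add: algebra_simps)
  also have "\<dots> = of_int (x^2 - D * y^2)" unfolding D_real[symmetric] by (simp add: power2_eq_square)
  finally show ?thesis .
qed

lemma v_inv: "x^2 - D * y^2 = N \<Longrightarrow> N * N = 1 \<Longrightarrow> v (N * x) (- (N * y)) * v x y = 1"
proof -
  assume n: "x^2 - D * y^2 = N" "N * N = 1"
  have "v (N * x) (- (N * y)) * v x y = of_int N * (v x y * (of_int x - s * of_int y))"
    unfolding v_def by (simp add: algebra_simps)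
  also have "\<dots> = of_int (N * N)" unfolding v_conj n(1) by simp
  finally show ?thesis using n(2) by simp
qed

lemma Mt_mult: "mat2_mult (Mt p q x y) (Mt p q x' y') = Mt p q (x * x' + D * y * y') (x * y' + y * x')"
  unfolding Mt_def by (simp add: algebra_simps)

lemma Mt_inv: "mat2_inv (Mt p q x y) = Mt p q ((x^2 - D * y^2) * x) (- ((x^2 - D * y^2) * y))"
  unfolding Mt_def by (simp add: Let_def power2_eq_square algebra_simps)

lemma Mt_det: "mat2_det (Mt p q x y) = x^2 - D * y^2"
  unfolding Mt_def by (simp add: power2_eq_square algebra_simps)

lemma Mt_one: "mat2_one = Mt p q 1 0"
  unfolding Mt_def mat2_one_def by simp

lemma pm1_mult: "(a::int) * a = 1 \<Longrightarrow> b * b = 1 \<Longrightarrow> (a * b) * (a * b) = 1"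
  by (simp add: algebra_simps)

lemma pow_Mt:
  assumes "(x^2 - D * y^2) * (x^2 - D * y^2) = 1"
  shows "\<exists>X Y. mat2_pow (Mt p q x y) k = Mt p q X Y \<and> v X Y = v x y ^ k \<and> (X^2 - D * Y^2) * (X^2 - D * Y^2) = 1"
proof (induction k)
  case 0 then show ?case by (intro exI[of _ 1] exI[of _ 0]) (simp add: Mt_one v_def)
next
  case (Suc k)
  then obtain X Y where XY: "mat2_pow (Mt p q x y) k = Mt p q X Y" "v X Y = v x y ^ k" "(X^2 - D * Y^2) * (X^2 - D * Y^2) = 1" by blast
  define X' where "X' = x * X + D * y * Y"
  define Y' where "Y' = x * Y + y * X"
  have 1: "mat2_pow (Mt p q x y) (Suc k) = Mt p q X' Y'"
    using XY(1) unfolding X'_def Y'_def by (simp add: Mt_mult)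
  have 2: "v X' Y' = v x y ^ Suc k" unfolding X'_def Y'_def v_mult XY(2) by simp
  have 3: "(X'^2 - D * Y'^2) * (X'^2 - D * Y'^2) = 1"
    unfolding X'_def Y'_def norm_mult using pm1_mult[OF assms XY(3)] .
  show ?case using 1 2 3 by blast
qed

lemma zpow_Mt:
  assumes e: "e * e = 1" and n: "x^2 - D * y^2 = e" and vp: "v x y > 0"
  shows "\<exists>X Y. mat2_zpow (Mt p q x y) k = Mt p q X Y \<and> v X Y = v x y powi k \<and> (X^2 - D * Y^2) * (X^2 - D * Y^2) = 1"
proof (cases "k \<ge> 0")
  case True
  then show ?thesis using pow_Mt[of x y "nat k"] e n unfolding mat2_zpow_def
    by (simp add: power_int_def)
next
  case False
  have ni: "(e * x)^2 - D * (- (e * y))^2 = e * e * e" using n by (simp add: power2_eq_square algebra_simps)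
  have vi: "v (e * x) (- (e * y)) = inverse (v x y)"
    using v_inv[OF n e] vp by (simp add: field_simps)
  have ni': "((e * x)^2 - D * (- (e * y))^2) * ((e * x)^2 - D * (- (e * y))^2) = 1"
    unfolding ni using e by (simp add: algebra_simps)
  obtain X Y where XY: "mat2_pow (Mt p q (e * x) (- (e * y))) (nat (-k)) = Mt p q X Y"
      "v X Y = v (e * x) (- (e * y)) ^ nat (-k)" "(X^2 - D * Y^2) * (X^2 - D * Y^2) = 1"
    using pow_Mt[of "e * x" "- (e * y)" "nat (-k)", OF ni'] by blast
  have "v x y powi k = inverse (v x y) ^ nat (-k)" using False by (simp add: power_int_def)
  then show ?thesis using False XY vi unfolding mat2_zpow_def Mt_inv n by auto
qed

lemma fund_min:
  assumes f: "is_fundamental_solution D e x1 y1" and e: "e * e = 1"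
    and n: "x^2 - D * y^2 = e" and w: "v x y > 1"
  shows "v x y \<ge> v x1 y1"
proof -
  have x1: "x1 > 0" "y1 > 0" "x1^2 - D * y1^2 = e" and mn: "\<And>x y. x > 0 \<Longrightarrow> y > 0 \<Longrightarrow> x^2 - D * y^2 = e \<Longrightarrow> x1 \<le> x"
    using f unfolding is_fundamental_solution_def by auto
  define w' where "w' = of_int x - s * of_int y"
  have ww: "v x y * w' = of_int e" unfolding w'_def v_conj n ..
  have ee: "real_of_int e = 1 \<or> real_of_int e = -1" using e by (metis zmult_eq_1_iff of_int_1 of_int_minus)
  have aw: "\<bar>w'\<bar> < 1"
  proof -
    have "\<bar>v x y\<bar> * \<bar>w'\<bar> = 1" using ww ee by (metis abs_mult abs_neg_one abs_one)
    then show ?thesis using w by (metis abs_of_pos dual_order.strict_trans less_numeral_extra(1) mult_less_cancel_right1 zero_less_one abs_ge_zero order.strict_iff_not not_less mult_le_cancel_left1)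
  qed
  have xs: "2 * of_int x = v x y + w'" unfolding v_def w'_def by simp
  have ys: "2 * (s * of_int y) = v x y - w'" unfolding v_def w'_def by simp
  have xp: "x > 0" using xs aw w by (simp add: abs_less_iff) 
  have "s * of_int y > 0" using ys aw w by (simp add: abs_less_iff)
  then have "real_of_int y > 0" using s_pos by (metis zero_less_mult_pos)
  then have yp: "y > 0" by simp
  have "x1 \<le> x" using mn[OF xp yp n] .
  then have "x1^2 \<le> x^2" using x1 by (simp add: power_mono)
  then have "D * y1^2 \<le> D * y^2" using x1(3) n by linarith
  then have "y1^2 \<le> y^2" using D_pos by (meson mult_le_cancel_left_pos)
  then have "y1 \<le> y" by (rule power2_le_imp_le) (use yp in simp)
  have "v x1 y1 \<le> v x y" unfolding v_def
    using \<open>x1 \<le> x\<close> \<open>y1 \<le> y\<close> s_pos by (intro add_mono) (auto intro: mult_left_mono)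
  then show ?thesis .
qed


lemma classify:
  assumes f: "is_fundamental_solution D e0 x1 y1" and e0: "e0 * e0 = 1"
    and noneg: "e0 = 1 \<Longrightarrow> \<not> (\<exists>x y::int. x^2 - D * y^2 = -1)"
    and n: "(x^2 - D * y^2) * (x^2 - D * y^2) = 1" and vp: "v x y > 0"
  shows "\<exists>k. Mt p q x y = mat2_zpow (Mt p q x1 y1) k"
proof -
  have x1: "x1 > 0" "y1 > 0" "x1^2 - D * y1^2 = e0"
    using f unfolding is_fundamental_solution_def by auto
  define \<epsilon> where "\<epsilon> = v x1 y1"
  have "s * of_int y1 > 0" using s_pos x1 by simp
  moreover have "real_of_int x1 \<ge> 1" using x1 by simp
  ultimately have eps1: "\<epsilon> > 1" unfolding \<epsilon>_def v_def by simp
  define u where "u = v x y"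
  obtain k where k: "\<epsilon> powi k \<le> u" "u < \<epsilon> powi (k + 1)" using floor_pow[OF eps1] vp unfolding u_def by blast
  obtain X Y where XY: "mat2_zpow (Mt p q x1 y1) (-k) = Mt p q X Y" "v X Y = \<epsilon> powi (-k)"
      "(X^2 - D * Y^2) * (X^2 - D * Y^2) = 1"
    using zpow_Mt[OF e0 x1(3)] eps1 unfolding \<epsilon>_def by fastforce
  define x2 where "x2 = x * X + D * y * Y"
  define y2 where "y2 = x * Y + y * X"
  define N2 where "N2 = x2^2 - D * y2^2"
  have N2: "N2 * N2 = 1" unfolding N2_def x2_def y2_def norm_mult using pm1_mult[OF n XY(3)] .
  have v2: "v x2 y2 = u * \<epsilon> powi (-k)" unfolding x2_def y2_def v_mult XY(2) u_def ..
  have epk: "\<epsilon> powi k > 0" using eps1 by simp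
  have inv: "\<epsilon> powi (-k) = inverse (\<epsilon> powi k)" by (simp add: power_int_minus)
  have v2ge: "v x2 y2 \<ge> 1" unfolding v2 inv using k(1) epk by (simp add: field_simps)
  have "\<epsilon> powi (k + 1) = \<epsilon> powi k * \<epsilon>" using eps1 by (simp add: power_int_add)
  then have v2lt: "v x2 y2 < \<epsilon>" unfolding v2 inv using k(2) epk by (simp add: field_simps)
  have v2eq: "v x2 y2 = 1"
  proof (rule ccontr)
    assume "v x2 y2 \<noteq> 1"
    then have gt: "v x2 y2 > 1" using v2ge by simp
    have N2pm: "N2 = 1 \<or> N2 = -1" using N2 zmult_eq_1_iff by blast
    have e0pm: "e0 = 1 \<or> e0 = -1" using e0 zmult_eq_1_iff by blast
    show False
    proof (cases "N2 = e0")
      case True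
      have "v x2 y2 \<ge> \<epsilon>" unfolding \<epsilon>_def by (rule fund_min[OF f e0 _ gt]) (use True N2_def in simp)
      then show False using v2lt by simp
    next
      case False
      then have e0m: "e0 = -1" and N21: "N2 = 1" using N2pm e0pm noneg N2_def by auto
      define x4 where "x4 = N2 * x2"
      define y4 where "y4 = - (N2 * y2)"
      have v4: "v x4 y4 * v x2 y2 = 1" unfolding x4_def y4_def using v_inv[OF N2_def[symmetric] N2] .
      have n4: "x4^2 - D * y4^2 = 1" unfolding x4_def y4_def using N21 N2_def by simp
      define x3 where "x3 = x1 * x4 + D * y1 * y4"
      define y3 where "y3 = x1 * y4 + y1 * x4"
      have n3: "x3^2 - D * y3^2 = e0" unfolding x3_def y3_def norm_mult x1(3) n4 by simp
      have v3: "v x3 y3 = \<epsilon> * v x4 y4" unfolding x3_def y3_def v_mult \<epsilon>_def ..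
      have v4v: "v x4 y4 = inverse (v x2 y2)" using v4 gt by (simp add: field_simps)
      have "v x3 y3 > 1" unfolding v3 v4v using v2lt gt by (simp add: field_simps)
      then have "v x3 y3 \<ge> \<epsilon>" unfolding \<epsilon>_def by (rule fund_min[OF f e0 n3])
      then have "inverse (v x2 y2) \<ge> 1" unfolding v3 v4v using eps1 by simp
      then show False using gt by (simp add: field_simps)
    qed
  qed
  then have uk: "u = \<epsilon> powi k" unfolding v2 inv using epk by (simp add: field_simps)
  obtain X' Y' where XY': "mat2_zpow (Mt p q x1 y1) k = Mt p q X' Y'" "v X' Y' = \<epsilon> powi k"
    using zpow_Mt[OF e0 x1(3)] eps1 unfolding \<epsilon>_def by fastforce
  have "v x y = v X' Y'" using XY'(2) uk unfolding u_def by simp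
  then have "x = X' \<and> y = Y'" unfolding v_def by (rule Mt_inj)
  then show ?thesis using XY'(1) by metis
qed


lemma main_case:
  assumes f: "is_fundamental_solution D e0 x1 y1" and e0: "e0 * e0 = 1"
    and noneg: "e0 = 1 \<Longrightarrow> \<not> (\<exists>x y::int. x^2 - D * y^2 = -1)"
    and A: "A \<in> GL2Z"
  shows "isometric_aut \<alpha>' A \<longleftrightarrow> (\<exists>n::int. A = mat2_zpow (x1, int q * y1, int p * y1, x1) n)"
proof -
  have E: "(x1, int q * y1, int p * y1, x1) = Mt p q x1 y1" unfolding Mt_def ..
  have x1: "x1 > 0" "y1 > 0" "x1^2 - D * y1^2 = e0"
    using f unfolding is_fundamental_solution_def by auto
  have vp1: "v x1 y1 > 0" using x1 s_pos unfolding v_def by (simp add: add_pos_pos)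
  show ?thesis unfolding E
  proof
    assume "isometric_aut \<alpha>' A"
    then have "good \<alpha>' A" using iso_good[OF irr A] by blast
    then obtain x y where M: "A = Mt p q x y" and vp: "real_of_int x + s * of_int y > 0"
      using good_Mt by blast
    have "mat2_det A = 1 \<or> mat2_det A = -1" using A unfolding GL2Z_def by simp
    then have "(x^2 - D * y^2) * (x^2 - D * y^2) = 1" unfolding M Mt_det by auto
    from classify[OF f e0 noneg this] vp show "\<exists>n. A = mat2_zpow (Mt p q x1 y1) n"
      unfolding M v_def by metis
  next
    assume "\<exists>n. A = mat2_zpow (Mt p q x1 y1) n"
    then obtain n where An: "A = mat2_zpow (Mt p q x1 y1) n" by blast
    obtain X Y where XY: "mat2_zpow (Mt p q x1 y1) n = Mt p q X Y" "v X Y = v x1 y1 powi n"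
      using zpow_Mt[OF e0 x1(3) vp1] by blast
    have "v X Y > 0" using XY(2) vp1 by simp
    then have "good \<alpha>' A" unfolding An XY(1) good_Mt v_def by blast
    then show "isometric_aut \<alpha>' A" by (rule good_isometric[OF A])
  qed
qed

end


theorem mainTheorem15:
  fixes p q :: nat
  assumes "coprime p q"
    and "sqrt (real p / real q) \<notin> \<rat>"
  shows
   "((\<not> (\<exists>x y :: int. x\<^sup>2 - int (p * q) * y\<^sup>2 = -1)) \<longrightarrow>
      (\<forall>x1 y1. is_fundamental_solution (int (p * q)) 1 x1 y1 \<longrightarrow>
        (\<forall>A\<in>GL2Z. isometric_aut (sqrt (real p / real q)) A \<longleftrightarrow>
           (\<exists>n::int. A = mat2_zpow (x1, int q * y1, int p * y1, x1) n))))
    \<and>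
    ((\<exists>x y :: int. x\<^sup>2 - int (p * q) * y\<^sup>2 = -1) \<longrightarrow>
      (\<forall>x1 y1. is_fundamental_solution (int (p * q)) (-1) x1 y1 \<longrightarrow>
        (\<forall>A\<in>GL2Z. isometric_aut (sqrt (real p / real q)) A \<longleftrightarrow>
           (\<exists>n::int. A = mat2_zpow (x1, int q * y1, int p * y1, x1) n))))"
proof -
  have q0: "q > 0"
  proof (rule ccontr)
    assume "\<not> q > 0" then have "q = 0" by simp
    then show False using assms(2) by simp
  qed
  have p0: "p > 0"
  proof (rule ccontr)
    assume "\<not> p > 0" then have "p = 0" by simp
    then show False using assms(2) by simp
  qed
  note mc = main_case[OF p0 q0 assms(1) assms(2)]
  show ?thesis
  proof (intro conjI impI allI ballI)
    fix x1 y1 A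
    assume "\<not> (\<exists>x y :: int. x\<^sup>2 - int (p * q) * y\<^sup>2 = -1)" "is_fundamental_solution (int (p * q)) 1 x1 y1" "A \<in> GL2Z"
    then show "isometric_aut (sqrt (real p / real q)) A \<longleftrightarrow>
           (\<exists>n::int. A = mat2_zpow (x1, int q * y1, int p * y1, x1) n)"
      using mc[of 1 x1 y1 A] by simp
  next
    fix x1 y1 A
    assume "is_fundamental_solution (int (p * q)) (-1) x1 y1" "A \<in> GL2Z"
    then show "isometric_aut (sqrt (real p / real q)) A \<longleftrightarrow>
           (\<exists>n::int. A = mat2_zpow (x1, int q * y1, int p * y1, x1) n)"
      using mc[of "-1" x1 y1 A] by simp
  qed
qed


end
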